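(* Let $n$, $k$, $t$ be positive integers with $k\geq t+1$ and $n\geq 2k$, and let $V$ be an $n$-dimensional vector space over $\mathbb{F}_q$. Suppose $\mathcal{F}\subseteq{V\brack k}$ is almost $t$-intersecting and $\mathcal{B}\subseteq\mathcal{F}$. If $A$ is a $t$-cover of $\mathcal{F}\setminus\mathcal{B}$ with $\dim(A)<\tau_t(\mathcal{F})\leq k$, then there exists a subspace $A_u$ of $V$ with $A\subseteq A_u$, $\tau_t(\mathcal{F})\leq\dim(A_u)$ and $$|\mathcal{B}_A|\leq{k-t+1\brack 1}^{\dim(A_u)-\dim(A)}|\mathcal{B}_{A_u}|+\sum_{i=0}^{\tau_t(\mathcal{F})-\dim(A)-1}{k-t+1\brack 1}^{i}.$$
   Context: $q$ is a prime power; ${W\brack k}$ is the set of $k$-dimensional subspaces of $W$ and ${m\brack r}$ the Gaussian binomial coefficient $\prod_{i=0}^{r-1}\frac{q^{m-i}-1}{q^{r-i}-1}$. A family $\mathcal{F}\subseteq{V\brack k}$ is almost $t$-intersecting if for each $F\in\mathcal{F}$ there is at most one $F'\in\mathcal{F}$ with $\dim(F\cap F')<t$. A subspace $W$ is a $t$-cover of a family $\mathcal{A}$ if $\dim(W\cap F)\geq t$ for all $F\in\mathcal{A}$; $\tau_t(\mathcal{F})$ is the minimum dimension of a $t$-cover of $\mathcal{F}$. For a family $\mathcal{B}$ and subspace $A$, $\mathcal{B}_A=\{F\in\mathcal{B}: A\subseteq F\}$. *)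

theory Defs
  imports "HOL-Analysis.Analysis"
begin

text \<open>Ambient space V = F_q^n, modelled as the type 'a ^ 'n with 'a a finite field
  (so q = CARD('a) is a prime power) and n = CARD('n).\<close>

definition gauss_binom :: "nat \<Rightarrow> nat \<Rightarrow> nat \<Rightarrow> real" where
  "gauss_binom q m r = (\<Prod>i<r. (real q ^ (m - i) - 1) / (real q ^ (r - i) - 1))"

definition ksubspaces :: "nat \<Rightarrow> ('a::field ^ 'n) set set" where
  "ksubspaces k = {W. vec.subspace W \<and> vec.dim W = k}"

definition almost_t_intersecting :: "nat \<Rightarrow> ('a::field ^ 'n) set set \<Rightarrow> bool" where
  "almost_t_intersecting t \<F> \<longleftrightarrow>
     (\<forall>F\<in>\<F>. card {F'\<in>\<F>. vec.dim (F \<inter> F') < t} \<le> 1)"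

definition t_cover :: "nat \<Rightarrow> ('a::field ^ 'n) set \<Rightarrow> ('a ^ 'n) set set \<Rightarrow> bool" where
  "t_cover t W \<A> \<longleftrightarrow> vec.subspace W \<and> (\<forall>F\<in>\<A>. vec.dim (W \<inter> F) \<ge> t)"

definition tau :: "nat \<Rightarrow> ('a::field ^ 'n) set set \<Rightarrow> nat" where
  "tau t \<F> = (LEAST d. \<exists>W. t_cover t W \<F> \<and> vec.dim W = d)"

definition containing :: "('a ^ 'n) set set \<Rightarrow> ('a ^ 'n) set \<Rightarrow> ('a ^ 'n) set set" where
  "containing \<B> A = {F\<in>\<B>. A \<subseteq> F}"

end

theory Submission
  imports Defs
begin


lemma card_vec_span:
  fixes D :: "('a::{field,finite}^'n) set"
  assumes ind: "vec.independent D"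
  shows "card (vec.span D) = CARD('a) ^ card D"
proof -
  have fin: "finite D" using ind vec.finiteI_independent by blast
  let ?f = "\<lambda>u. \<Sum>v\<in>D. u v *s v"
  have sp: "vec.span D = ?f ` (D \<rightarrow>\<^sub>E (UNIV::'a set))"
    unfolding vec.span_finite[OF fin]
  proof (intro equalityI subsetI)
    fix x assume "x \<in> range ?f"
    then obtain u where x: "x = ?f u" by blast
    have "?f u = ?f (restrict u D)" by (rule sum.cong) auto
    then show "x \<in> ?f ` (D \<rightarrow>\<^sub>E UNIV)" using x
      by (intro image_eqI[where x="restrict u D"]) auto
  qed auto
  have inj: "inj_on ?f (D \<rightarrow>\<^sub>E (UNIV::'a set))"
  proof (rule inj_onI)
    fix u u' assume u: "u \<in> D \<rightarrow>\<^sub>E UNIV" and u': "u' \<in> D \<rightarrow>\<^sub>E UNIV" and eq: "?f u = ?f u'"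
    have "(\<Sum>v\<in>D. (u v - u' v) *s v) = 0"
      using eq by (simp add: vec.scale_left_diff_distrib sum_subtractf)
    then have "\<forall>v\<in>D. u v - u' v = 0"
      using ind unfolding vec.independent_explicit
      by (elim conjE allE[where x="\<lambda>v. u v - u' v"]) simp
    then show "u = u'" using u u' by (intro PiE_ext) auto
  qed
  show ?thesis unfolding sp card_image[OF inj] card_PiE[OF fin] by simp
qed

lemma fiber_bound:
  assumes fin: "finite S" and m: "\<And>x. x \<in> S \<Longrightarrow> m \<le> card {y\<in>S. f y = f x}"
  shows "m * card (f ` S) \<le> card S"
proof -
  have "S = (\<Union>z\<in>f ` S. {y\<in>S. f y = z})" by auto
  then have "card S = (\<Sum>z\<in>f ` S. card {y\<in>S. f y = z})"
    using fin by (subst card_UN_disjoint[symmetric]) auto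
  also have "\<dots> \<ge> (\<Sum>z\<in>f ` S. m)"
    by (rule sum_mono) (auto intro: m)
  finally show ?thesis by (simp add: mult.commute)
qed

lemma span_insert_scale:
  fixes x :: "'a::field^'n"
  assumes "c \<noteq> 0"
  shows "vec.span (insert (c *s x) A) = vec.span (insert x A)"
proof
  show "vec.span (insert (c *s x) A) \<subseteq> vec.span (insert x A)"
    by (rule vec.span_minimal) (auto intro: vec.span_scale vec.span_base)
  have "x = inverse c *s (c *s x)" using assms by simp
  then have "x \<in> vec.span (insert (c *s x) A)"
    by (metis insertI1 vec.span_base vec.span_scale)
  then show "vec.span (insert x A) \<subseteq> vec.span (insert (c *s x) A)"
    by (intro vec.span_minimal) (auto intro: vec.span_base)
qed

lemma lines_bound:
  fixes W A :: "('a::{field,finite}^'n) set"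
  assumes W: "vec.subspace W"
  shows "(CARD('a) - 1) * card ((\<lambda>v. vec.span (insert v A)) ` (W - {0})) \<le> card W - 1"
proof -
  let ?\<phi> = "\<lambda>v. vec.span (insert v A)"
  have "(CARD('a) - 1) * card (?\<phi> ` (W - {0})) \<le> card (W - {0})"
  proof (rule fiber_bound)
    show "finite (W - {0})" by simp
    fix x assume x: "x \<in> W - {0}"
    have inj: "inj_on (\<lambda>c::'a. c *s x) (UNIV - {0})"
      using x by (intro inj_onI) simp
    have "(\<lambda>c::'a. c *s x) ` (UNIV - {0}) \<subseteq> {y \<in> W - {0}. ?\<phi> y = ?\<phi> x}"
      using x W by (auto intro: vec.subspace_scale simp: span_insert_scale)
    then have "card ((\<lambda>c::'a. c *s x) ` (UNIV - {0})) \<le> card {y \<in> W - {0}. ?\<phi> y = ?\<phi> x}"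
      by (intro card_mono) simp_all
    moreover have "card ((\<lambda>c::'a. c *s x) ` (UNIV - {0})) = CARD('a) - 1"
      using card_image[OF inj] by simp
    ultimately show "CARD('a) - 1 \<le> card {y \<in> W - {0}. ?\<phi> y = ?\<phi> x}" by simp
  qed
  moreover have "card (W - {0}) = card W - 1"
    using vec.subspace_0[OF W] by (simp add: card_Diff_singleton)
  ultimately show ?thesis by simp
qed

lemma main_ind:
  fixes FF BB :: "('a::{field,finite}^'n) set set" and T k t m :: nat and A :: "('a^'n) set"
  assumes FF: "FF \<subseteq> ksubspaces k" and ai: "almost_t_intersecting t FF" and BB: "BB \<subseteq> FF"
    and t1: "t \<ge> 1" and kt: "k \<ge> t + 1"
    and Tmin: "\<And>W. t_cover t W FF \<Longrightarrow> T \<le> vec.dim W"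
    and g_def: "g = gauss_binom CARD('a) (k - t + 1) 1"
  shows "t_cover t A (FF - BB) \<Longrightarrow> vec.dim A \<le> T \<Longrightarrow> T - vec.dim A = m \<Longrightarrow>
    \<exists>Au. vec.subspace Au \<and> A \<subseteq> Au \<and> vec.dim Au = T \<and>
      real (card (containing BB A)) \<le> g ^ m * real (card (containing BB Au)) + (\<Sum>i<m. g ^ i)"
proof (induction m arbitrary: A)
  case 0
  then have "vec.subspace A" "vec.dim A = T" unfolding t_cover_def by auto
  then show ?case by (intro exI[of _ A]) auto
next
  case (Suc m)
  note cov = Suc.prems(1) and dA = Suc.prems(2) and Tm = Suc.prems(3)
  define q where "q = CARD('a)"
  define d where "d = k - t + 1"
  have q2: "q \<ge> 2"
  proof -
    have "{0::'a, 1} \<subseteq> UNIV" by simp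
    then have "card {0::'a, 1} \<le> q" unfolding q_def by (intro card_mono) simp_all
    then show ?thesis by simp
  qed
  have gq: "g = (real q ^ d - 1) / (real q - 1)"
    unfolding g_def gauss_binom_def q_def d_def by simp
  have qd1: "real q ^ d \<ge> 1" using q2 by simp
  have g0: "g \<ge> 0" unfolding gq using q2 qd1 by simp
  have Asub: "vec.subspace A" using cov unfolding t_cover_def by auto
  have "\<not> t_cover t A FF"
  proof
    assume "t_cover t A FF"
    then have "T \<le> vec.dim A" by (rule Tmin)
    then show False using Tm by simp
  qed
  then obtain F0 where F0: "F0 \<in> FF" "vec.dim (A \<inter> F0) < t"
    using Asub unfolding t_cover_def by (auto simp: not_le)
  have F0s: "vec.subspace F0" "vec.dim F0 = k" using F0 FF unfolding ksubspaces_def by auto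
  define I where "I = A \<inter> F0"
  have Is: "vec.subspace I" unfolding I_def using Asub F0s by (simp add: vec.subspace_inter)
  obtain B0 where B0: "B0 \<subseteq> I" "vec.independent B0" "I \<subseteq> vec.span B0" "card B0 = vec.dim I"
    using vec.basis_exists[of I] by blast
  obtain C where C: "B0 \<subseteq> C" "C \<subseteq> F0" "vec.independent C" "F0 \<subseteq> vec.span C"
    using vec.maximal_independent_subset_extend[of B0 F0] B0 unfolding I_def by blast
  have cardC: "card C = k" using vec.basis_card_eq_dim[OF C(2) C(4) C(3)] F0s by simp
  have finC: "finite C" using C(3) vec.finiteI_independent by blast
  have "card (C - B0) = k - card B0" using cardC finC C(1) by (simp add: card_Diff_subset finite_subset)
  moreover have "card B0 < t" using B0(4) F0(2) unfolding I_def by simp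
  ultimately have dle: "d \<le> card (C - B0)" unfolding d_def using kt by simp
  obtain D where D: "D \<subseteq> C - B0" "card D = d" "finite D"
    using obtain_subset_with_card_n[OF dle] by blast
  have indD: "vec.independent D" using D(1) C(3) vec.independent_mono by blast
  define W where "W = vec.span D"
  have Ws: "vec.subspace W" unfolding W_def by simp
  have WF0: "W \<subseteq> F0" unfolding W_def using D(1) C(2) F0s by (intro vec.span_minimal) auto
  have dimW: "vec.dim W = d" unfolding W_def using vec.dim_span_eq_card_independent[OF indD] D by simp
  have cardW: "card W = q ^ d" unfolding W_def q_def using card_vec_span[OF indD] D by simp
  have WA: "v = 0" if "v \<in> W" "v \<in> A" for v
  proof -
    have indDB: "vec.independent (D \<union> B0)" using vec.independent_mono[OF C(3), of "D \<union> B0"] D(1) C(1) by blast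
    have finB0: "finite B0" using B0(2) vec.finiteI_independent by blast
    have disj: "D \<inter> B0 = {}" using D(1) by auto
    have "vec.dim {x + y |x y. x \<in> vec.span D \<and> y \<in> vec.span B0} + vec.dim (vec.span D \<inter> vec.span B0)
        = vec.dim (vec.span D) + vec.dim (vec.span B0)"
      by (rule vec.dim_sums_Int) simp_all
    moreover have "{x + y |x y. x \<in> vec.span D \<and> y \<in> vec.span B0} = vec.span (D \<union> B0)"
      by (simp add: vec.span_Un)
    moreover have "vec.dim (vec.span (D \<union> B0)) = card D + card B0"
      using vec.dim_span_eq_card_independent[OF indDB] card_Un_disjoint[OF D(3) finB0 disj] by simp
    moreover have "vec.dim (vec.span D) = card D" using vec.dim_span_eq_card_independent[OF indD] .
    moreover have "vec.dim (vec.span B0) = card B0" using vec.dim_span_eq_card_independent[OF B0(2)] .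
    ultimately have "vec.dim (vec.span D \<inter> vec.span B0) = 0" by simp
    then have "vec.span D \<inter> vec.span B0 \<subseteq> {0}" by simp
    moreover have "v \<in> vec.span B0" using that WF0 B0(3) unfolding I_def by auto
    ultimately show ?thesis using that(1) unfolding W_def by auto
  qed
  define E where "E = {F'\<in>FF. vec.dim (F0 \<inter> F') < t}"
  have cardE: "card E \<le> 1" using ai F0(1) unfolding almost_t_intersecting_def E_def by blast
  define \<phi> where "\<phi> = (\<lambda>v. vec.span (insert v A))"
  define Us where "Us = \<phi> ` (W - {0})"
  have cover: "containing BB A \<subseteq> E \<union> (\<Union>U\<in>Us. containing BB U)"
  proof
    fix F' assume "F' \<in> containing BB A"
    then have F': "F' \<in> BB" "A \<subseteq> F'" unfolding containing_def by auto
    have F'F: "F' \<in> FF" using F' BB by auto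
    have F's: "vec.subspace F'" "vec.dim F' = k" using F'F FF unfolding ksubspaces_def by auto
    show "F' \<in> E \<union> (\<Union>U\<in>Us. containing BB U)"
    proof (cases "F' \<in> E")
      case False
      then have dX: "vec.dim (F0 \<inter> F') \<ge> t" using F'F unfolding E_def by auto
      define X where "X = F0 \<inter> F'"
      have Xs: "vec.subspace X" unfolding X_def using F0s F's by (simp add: vec.subspace_inter)
      have si: "vec.dim {x + y |x y. x \<in> X \<and> y \<in> W} + vec.dim (X \<inter> W) = vec.dim X + vec.dim W"
        by (rule vec.dim_sums_Int[OF Xs Ws])
      have "{x + y |x y. x \<in> X \<and> y \<in> W} \<subseteq> F0"
        using WF0 F0s unfolding X_def by (auto intro: vec.subspace_add)
      then have "vec.dim {x + y |x y. x \<in> X \<and> y \<in> W} \<le> vec.dim F0"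
        by (rule vec.dim_subset)
      then have "vec.dim {x + y |x y. x \<in> X \<and> y \<in> W} \<le> k" using F0s by simp
      then have "vec.dim (X \<inter> W) \<noteq> 0" using si dX dimW kt unfolding X_def d_def by linarith
      then have "\<not> (X \<inter> W \<subseteq> {0})" by simp
      then obtain v where v: "v \<in> X" "v \<in> W" "v \<noteq> 0" by blast
      have vA: "v \<notin> A" using WA v by blast
      have "\<phi> v \<subseteq> F'" unfolding \<phi>_def using v F' F's unfolding X_def
        by (intro vec.span_minimal) auto
      then have "F' \<in> containing BB (\<phi> v)" using F' unfolding containing_def by auto
      moreover have "\<phi> v \<in> Us" unfolding Us_def using v by auto
      ultimately show ?thesis by blast
    qed simp
  qed
  have Uprops: "vec.subspace U \<and> A \<subseteq> U \<and> t_cover t U (FF - BB) \<and> vec.dim U \<le> T \<and> T - vec.dim U = m"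
    if UU: "U \<in> Us" for U
  proof -
    obtain v where v: "v \<in> W" "v \<noteq> 0" "U = \<phi> v" using UU unfolding Us_def by auto
    have spA: "vec.span A = A" using Asub by simp
    have vA: "v \<notin> vec.span A" unfolding spA using WA v by blast
    have Us: "vec.subspace U" unfolding v \<phi>_def by simp
    have AU: "A \<subseteq> U" unfolding v \<phi>_def using vec.span_superset by blast
    have dU: "vec.dim U = vec.dim A + 1" unfolding v \<phi>_def using vA by (simp add: vec.dim_insert)
    have "t_cover t U (FF - BB)"
      unfolding t_cover_def
    proof (intro conjI Us ballI)
      fix F assume "F \<in> FF - BB"
      then have "t \<le> vec.dim (A \<inter> F)" using cov unfolding t_cover_def by auto
      also have "\<dots> \<le> vec.dim (U \<inter> F)" using AU by (intro vec.dim_subset) auto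
      finally show "t \<le> vec.dim (U \<inter> F)" .
    qed
    then show ?thesis using Us AU dU Tm by auto
  qed
  have "\<forall>U\<in>Us. \<exists>Au. vec.subspace Au \<and> U \<subseteq> Au \<and> vec.dim Au = T \<and>
      real (card (containing BB U)) \<le> g ^ m * real (card (containing BB Au)) + (\<Sum>i<m. g ^ i)"
  proof
    fix U assume U: "U \<in> Us"
    show "\<exists>Au. vec.subspace Au \<and> U \<subseteq> Au \<and> vec.dim Au = T \<and>
      real (card (containing BB U)) \<le> g ^ m * real (card (containing BB Au)) + (\<Sum>i<m. g ^ i)"
      by (rule Suc.IH) (use Uprops[OF U] in auto)
  qed
  from bchoice[OF this] obtain au where au0: "\<forall>U\<in>Us. vec.subspace (au U) \<and> U \<subseteq> au U \<and> vec.dim (au U) = T \<and>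
      real (card (containing BB U)) \<le> g ^ m * real (card (containing BB (au U))) + (\<Sum>i<m. g ^ i)"
    by blast
  have au: "vec.subspace (au U) \<and> U \<subseteq> au U \<and> vec.dim (au U) = T \<and>
      real (card (containing BB U)) \<le> g ^ m * real (card (containing BB (au U))) + (\<Sum>i<m. g ^ i)"
    if "U \<in> Us" for U using au0 that by blast
  define c where "c = (\<lambda>U. card (containing BB (au U)))"
  have finUs: "finite Us" unfolding Us_def by simp
  have "q ^ 1 \<le> q ^ d" using q2 unfolding d_def by (intro power_increasing) auto
  then have cW2: "card W \<ge> 2" using cardW q2 by simp
  have "W - {0} \<noteq> {}"
  proof
    assume "W - {0} = {}"
    then have "W \<subseteq> {0}" by blast
    then have "card W \<le> card {0::'a^'n}" by (intro card_mono) simp_all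
    then show False using cW2 by simp
  qed
  then have neUs: "Us \<noteq> {}" unfolding Us_def by simp
  define M where "M = Max (c ` Us)"
  have "M \<in> c ` Us" unfolding M_def using finUs neUs by (intro Max_in) auto
  then obtain U0 where U0: "U0 \<in> Us" "c U0 = M" by blast
  have cle: "c U \<le> c U0" if "U \<in> Us" for U using Max_ge[of "c ` Us"] finUs that U0 unfolding M_def by auto
  define S' where "S' = (\<Sum>i<m. g ^ i)"
  have S'0: "S' \<ge> 0" unfolding S'_def using g0 by (simp add: sum_nonneg)
  have "card (containing BB A) \<le> card (E \<union> (\<Union>U\<in>Us. containing BB U))"
    by (rule card_mono[OF _ cover]) simp
  also have "\<dots> \<le> card E + card (\<Union>U\<in>Us. containing BB U)" by (rule card_Un_le)
  also have "\<dots> \<le> 1 + (\<Sum>U\<in>Us. card (containing BB U))"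
    using cardE card_UN_le[OF finUs, of "containing BB"] by linarith
  finally have "real (card (containing BB A)) \<le> real (1 + (\<Sum>U\<in>Us. card (containing BB U)))"
    by (simp only: of_nat_le_iff)
  then have n1: "real (card (containing BB A)) \<le> 1 + (\<Sum>U\<in>Us. real (card (containing BB U)))"
    by simp
  have "(\<Sum>U\<in>Us. real (card (containing BB U))) \<le> (\<Sum>U\<in>Us. g ^ m * real (c U0) + S')"
  proof (rule sum_mono)
    fix U assume U: "U \<in> Us"
    have "real (card (containing BB U)) \<le> g ^ m * real (c U) + S'"
      using au[OF U] unfolding c_def S'_def by simp
    also have "\<dots> \<le> g ^ m * real (c U0) + S'"
      using cle[OF U] g0 by (simp add: mult_left_mono)
    finally show "real (card (containing BB U)) \<le> g ^ m * real (c U0) + S'" .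
  qed
  also have "\<dots> = real (card Us) * (g ^ m * real (c U0) + S')" by simp
  also have "\<dots> \<le> g * (g ^ m * real (c U0) + S')"
  proof (rule mult_right_mono)
    have "(q - 1) * card Us \<le> card W - 1" unfolding Us_def \<phi>_def q_def by (rule lines_bound[OF Ws])
    then have "real (q - 1) * real (card Us) \<le> real (card W - 1)" by (simp only: of_nat_le_iff of_nat_mult[symmetric])
    then have "(real q - 1) * real (card Us) \<le> real q ^ d - 1"
      using q2 cardW by (simp add: of_nat_diff)
    then show "real (card Us) \<le> g" unfolding gq using q2 by (simp add: pos_le_divide_eq mult.commute)
    show "0 \<le> g ^ m * real (c U0) + S'" using g0 S'0 by simp
  qed
  finally have n2: "real (card (containing BB A)) \<le> 1 + g * (g ^ m * real (c U0) + S')" using n1 by simp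
  have sumeq: "(\<Sum>i<Suc m. g ^ i) = 1 + g * S'"
    unfolding S'_def by (subst sum.lessThan_Suc_shift) (simp add: sum_distrib_left)
  show ?case
  proof (intro exI[of _ "au U0"] conjI)
    show "vec.subspace (au U0)" "vec.dim (au U0) = T" using au[OF U0(1)] by auto
    show "A \<subseteq> au U0" using au[OF U0(1)] Uprops[OF U0(1)] by blast
    show "real (card (containing BB A)) \<le> g ^ Suc m * real (card (containing BB (au U0))) + (\<Sum>i<Suc m. g ^ i)"
      using n2 unfolding sumeq c_def by (simp add: algebra_simps)
  qed
qed


theorem proposition3p3:
  fixes \<F> \<B> :: "('a::{field,finite} ^ 'n) set set"
    and A :: "('a ^ 'n) set"
    and n k t :: nat
  assumes "n = CARD('n)"
    and "t \<ge> 1" and "k \<ge> 1"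
    and "k \<ge> t + 1" and "n \<ge> 2 * k"
    and "\<F> \<subseteq> ksubspaces k"
    and "almost_t_intersecting t \<F>"
    and "\<B> \<subseteq> \<F>"
    and "t_cover t A (\<F> - \<B>)"
    and "vec.dim A < tau t \<F>" and "tau t \<F> \<le> k"
  shows "\<exists>Au. vec.subspace Au \<and> A \<subseteq> Au \<and> tau t \<F> \<le> vec.dim Au \<and>
     real (card (containing \<B> A)) \<le>
       gauss_binom CARD('a) (k - t + 1) 1 ^ (vec.dim Au - vec.dim A) * real (card (containing \<B> Au))
       + (\<Sum>i=0..tau t \<F> - vec.dim A - 1. gauss_binom CARD('a) (k - t + 1) 1 ^ i)"
proof -
  have Tmin: "tau t \<F> \<le> vec.dim W" if "t_cover t W \<F>" for W
    unfolding tau_def using that by (intro Least_le) blast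
  obtain Au where Au: "vec.subspace Au" "A \<subseteq> Au" "vec.dim Au = tau t \<F>"
    "real (card (containing \<B> A)) \<le> gauss_binom CARD('a) (k - t + 1) 1 ^ (tau t \<F> - vec.dim A)
       * real (card (containing \<B> Au)) + (\<Sum>i<tau t \<F> - vec.dim A. gauss_binom CARD('a) (k - t + 1) 1 ^ i)"
    using main_ind[OF assms(6,7,8,2,4) Tmin refl assms(9), of "tau t \<F> - vec.dim A"] assms(10) by auto
  have "{0..tau t \<F> - vec.dim A - 1} = {..<tau t \<F> - vec.dim A}" using assms(10) by auto
  then show ?thesis using Au by (intro exI[of _ Au]) auto
qed

end
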